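(* Let $n\ge1$, $1\le s\le n$, $A_1,\dots,A_s\subset\mathbb Z^n$ finite, $m_1+\dots+m_s=n$ nonnegative integers, let $b$ be a lifting in general position, let $F_0\subset\cdots\subset F_n=\mathbb R^n$ be a generic affine flag, let $(m_i(d))_{d}$ be sequences as in the context, and let $1\le d\le n$. Let $\boldsymbol\xi$ be a vertex of $X'_d$, and let $q\in\{1,\dots,s\}$ be the unique index with $m_q(\boldsymbol\xi)=m_q(d-1)+1$. Then there are exactly $m_q(\boldsymbol\xi)+1=m_q(d-1)+2$ edges of $X'_d$ having $\boldsymbol\xi$ as an endpoint. Moreover, these edges can be written as $\{\boldsymbol\xi+t\,\Delta_j\boldsymbol\xi: t\in(0,I_j)\}$, $j=1,\dots,m_q(\boldsymbol\xi)+1$, where each $\Delta_j\boldsymbol\xi\in\mathbb R^n$ and each $I_j$ is either a strictly positive real number or $+\infty$, and the balancing condition $\sum_j \Delta_j\boldsymbol\xi=0$ holds.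
   Context: A lifting is a function $b:A_1\sqcup\cdots\sqcup A_s\to\mathbb R$, written $b(i,\mathbf a)$. It is in general position if for every subset $S$ of $\{[-\mathrm e_i,\mathbf a,b(i,\mathbf a)]:\mathbf a\in A_i\}\subset\mathbb R^s\times\mathbb R^n\times\mathbb R$ of cardinality at most $n+s+1$, either the vectors of $S$ are linearly independent or $[0,\dots,0,1]$ is a linear combination of them. For $\boldsymbol\xi\in(\mathbb R^n)^*$, $\lambda_i(\boldsymbol\xi)=\max_{\mathbf a\in A_i}(\boldsymbol\xi(\mathbf a)-b(i,\mathbf a))$, and $m_i(\boldsymbol\xi)+1$ is the number of $\mathbf a\in A_i$ attaining it; these pairs $(i,\mathbf a)$ are the active constraints at $\boldsymbol\xi$. The flag consists of affine subspaces with $\dim F_d=d$. For each $i$, $(m_i(d))_{d=0,\dots,n}$ is non-decreasing in $\mathbb N_0$ with $m_i(0)=0$, $m_i(n)=m_i$, $\sum_i m_i(d)=d$. $X'_d=\{\boldsymbol\xi\in F_d: m_i(\boldsymbol\xi)\ge m_i(d-1)\ \forall i\}$. A vertex of $X'_d$ is a point $\boldsymbol\xi\in X'_d$ with $\sum_i m_i(\boldsymbol\xi)=d$. An edge of $X'_d$ is a one-dimensional set of the form $\{\boldsymbol\eta\in F_d:\ \text{the set of active constraints at }\boldsymbol\eta\text{ equals }W\}$, where $W$ contains exactly $m_i(d-1)+1$ elements of each $A_i$. *)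

theory Defs
  imports "HOL-Analysis.Analysis"
begin

text \<open>Index set {1..s} is rendered as a finite type 's, ambient space R^n as real^'n.
  A point xi of the dual space acts on a by the inner product xi \<bullet> a.\<close>

definition lam :: "('s \<Rightarrow> (real^'n) set) \<Rightarrow> ('s \<Rightarrow> real^'n \<Rightarrow> real) \<Rightarrow> real^'n \<Rightarrow> 's \<Rightarrow> real" where
  "lam A b xi i = Max ((\<lambda>a. xi \<bullet> a - b i a) ` A i)"

definition active :: "('s \<Rightarrow> (real^'n) set) \<Rightarrow> ('s \<Rightarrow> real^'n \<Rightarrow> real) \<Rightarrow> real^'n \<Rightarrow> ('s \<times> (real^'n)) set" where
  "active A b xi = {(i, a). a \<in> A i \<and> xi \<bullet> a - b i a = lam A b xi i}"

definition mult_at :: "('s \<Rightarrow> (real^'n) set) \<Rightarrow> ('s \<Rightarrow> real^'n \<Rightarrow> real) \<Rightarrow> real^'n \<Rightarrow> 's \<Rightarrow> nat" where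
  "mult_at A b xi i = card {a \<in> A i. xi \<bullet> a - b i a = lam A b xi i} - 1"

definition lifting_vectors :: "('s::finite \<Rightarrow> (real^'n) set) \<Rightarrow> ('s \<Rightarrow> real^'n \<Rightarrow> real) \<Rightarrow> ((real^'s) \<times> (real^'n) \<times> real) set" where
  "lifting_vectors A b = {(- axis i 1, a, b i a) | i a. a \<in> A i}"

definition general_position :: "('s::finite \<Rightarrow> (real^'n::finite) set) \<Rightarrow> ('s \<Rightarrow> real^'n \<Rightarrow> real) \<Rightarrow> bool" where
  "general_position A b \<longleftrightarrow>
     (\<forall>S \<subseteq> lifting_vectors A b. card S \<le> CARD('n) + CARD('s) + 1 \<longrightarrow>
        independent S \<or> (0, 0, 1) \<in> span S)"

definition affine_flag :: "(nat \<Rightarrow> (real^'n::finite) set) \<Rightarrow> bool" where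
  "affine_flag F \<longleftrightarrow>
     (\<forall>d < CARD('n). F d \<subseteq> F (Suc d)) \<and>
     (\<forall>d \<le> CARD('n). affine (F d) \<and> aff_dim (F d) = int d) \<and>
     F (CARD('n)) = UNIV"

text \<open>Linear space of directions along which all constraints in W stay tied.\<close>
definition tie_space :: "('s \<times> (real^'n)) set \<Rightarrow> (real^'n) set" where
  "tie_space W = {v. \<forall>i a a'. (i, a) \<in> W \<longrightarrow> (i, a') \<in> W \<longrightarrow> v \<bullet> (a - a') = 0}"

definition diffs :: "(real^'n) set \<Rightarrow> (real^'n) set" where
  "diffs S = {x - y | x y. x \<in> S \<and> y \<in> S}"

text \<open>Genericity of the flag: the direction space of every F_d meets every tie space
  transversally (intersection of linear subspaces in general position).\<close>
definition generic_flag :: "('s \<Rightarrow> (real^'n::finite) set) \<Rightarrow> (nat \<Rightarrow> (real^'n) set) \<Rightarrow> bool" where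
  "generic_flag A F \<longleftrightarrow>
     (\<forall>d \<le> CARD('n). \<forall>W \<subseteq> Sigma UNIV A.
        dim (diffs (F d) \<inter> tie_space W) = d + dim (tie_space W) - CARD('n))"

definition admissible_seq :: "('s::finite \<Rightarrow> nat) \<Rightarrow> nat \<Rightarrow> (nat \<Rightarrow> 's \<Rightarrow> nat) \<Rightarrow> bool" where
  "admissible_seq m n md \<longleftrightarrow>
     (\<forall>i. md 0 i = 0 \<and> md n i = m i \<and> (\<forall>d < n. md d i \<le> md (Suc d) i)) \<and>
     (\<forall>d \<le> n. (\<Sum>i\<in>UNIV. md d i) = d)"

definition Xd :: "('s \<Rightarrow> (real^'n) set) \<Rightarrow> ('s \<Rightarrow> real^'n \<Rightarrow> real) \<Rightarrow> (nat \<Rightarrow> (real^'n) set)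
                   \<Rightarrow> (nat \<Rightarrow> 's \<Rightarrow> nat) \<Rightarrow> nat \<Rightarrow> (real^'n) set" where
  "Xd A b F md d = {xi \<in> F d. \<forall>i. md (d - 1) i \<le> mult_at A b xi i}"

definition is_vertex :: "('s::finite \<Rightarrow> (real^'n) set) \<Rightarrow> ('s \<Rightarrow> real^'n \<Rightarrow> real) \<Rightarrow> (nat \<Rightarrow> (real^'n) set)
                   \<Rightarrow> (nat \<Rightarrow> 's \<Rightarrow> nat) \<Rightarrow> nat \<Rightarrow> real^'n \<Rightarrow> bool" where
  "is_vertex A b F md d xi \<longleftrightarrow> xi \<in> Xd A b F md d \<and> (\<Sum>i\<in>UNIV. mult_at A b xi i) = d"

definition is_edge :: "('s \<Rightarrow> (real^'n) set) \<Rightarrow> ('s \<Rightarrow> real^'n \<Rightarrow> real) \<Rightarrow> (nat \<Rightarrow> (real^'n) set)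
                   \<Rightarrow> (nat \<Rightarrow> 's \<Rightarrow> nat) \<Rightarrow> nat \<Rightarrow> (real^'n) set \<Rightarrow> bool" where
  "is_edge A b F md d E \<longleftrightarrow>
     (\<exists>W. (\<forall>i. card {a \<in> A i. (i, a) \<in> W} = md (d - 1) i + 1) \<and>
          E = {eta \<in> F d. active A b eta = W} \<and> aff_dim E = 1)"

definition is_endpoint :: "real^'n \<Rightarrow> (real^'n) set \<Rightarrow> bool" where
  "is_endpoint xi E \<longleftrightarrow> xi \<in> closure E \<and> xi \<notin> E"

end

theory Submission
  imports Defs
begin


lemma lam_ge:
  assumes "finite (A i)" "x \<in> A i"
  shows "eta \<bullet> x - b i x \<le> lam A b eta i"
  unfolding lam_def using assms by auto

lemma lam_in:
  assumes "finite (A i)" "A i \<noteq> {}"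
  shows "\<exists>x\<in>A i. eta \<bullet> x - b i x = lam A b eta i"
proof -
  have "lam A b eta i \<in> (\<lambda>a. eta \<bullet> a - b i a) ` A i"
    unfolding lam_def using assms by (intro Max_in) auto
  then show ?thesis by auto
qed

lemma active_iff:
  assumes "finite (A i)"
  shows "(i, x) \<in> active A b eta \<longleftrightarrow> x \<in> A i \<and> (\<forall>y\<in>A i. eta \<bullet> y - b i y \<le> eta \<bullet> x - b i x)"
proof
  assume "(i, x) \<in> active A b eta"
  then show "x \<in> A i \<and> (\<forall>y\<in>A i. eta \<bullet> y - b i y \<le> eta \<bullet> x - b i x)"
    using lam_ge[of A i, OF assms] unfolding active_def by fastforce
next
  assume h: "x \<in> A i \<and> (\<forall>y\<in>A i. eta \<bullet> y - b i y \<le> eta \<bullet> x - b i x)"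
  have "lam A b eta i = eta \<bullet> x - b i x"
    unfolding lam_def using assms h by (intro antisym Max.boundedI Max_ge) auto
  then show "(i, x) \<in> active A b eta" using h unfolding active_def by auto
qed

lemma active_sub: "active A b eta \<subseteq> Sigma UNIV A"
  unfolding active_def by auto

lemma card_active:
  assumes "finite (A i)" "A i \<noteq> {}"
  shows "card {a \<in> A i. (i, a) \<in> active A b eta} = mult_at A b eta i + 1"
proof -
  have e: "{a \<in> A i. (i, a) \<in> active A b eta} = {a \<in> A i. eta \<bullet> a - b i a = lam A b eta i}"
    unfolding active_def by auto
  obtain x where "x \<in> A i" "eta \<bullet> x - b i x = lam A b eta i" using lam_in[of A i, OF assms] by blast
  then have "card {a \<in> A i. eta \<bullet> a - b i a = lam A b eta i} \<ge> 1"
    using assms by (metis (mono_tags, lifting) One_nat_def Suc_leI card_gt_0_iff empty_iff finite_subset mem_Collect_eq subsetI)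
  then show ?thesis unfolding e mult_at_def by simp
qed

lemma sum_one_nat:
  fixes g :: "'s::finite \<Rightarrow> nat"
  assumes "sum g UNIV = 1" "g q \<noteq> 0" "i \<noteq> q"
  shows "g i = 0"
proof -
  have "sum g UNIV = g q + sum g (UNIV - {q})" by (simp add: sum.remove)
  moreover have "sum g (UNIV - {q}) \<ge> g i" using assms(3)
    by (intro member_le_sum) auto
  ultimately show ?thesis using assms by linarith
qed

lemma sum_one_ex:
  fixes g :: "'s::finite \<Rightarrow> nat"
  assumes "sum g UNIV = 1"
  shows "\<exists>q. g q = 1"
proof -
  obtain q where "g q \<noteq> 0" using assms by (metis sum.neutral zero_neq_one)
  moreover have "g q \<le> 1" using assms member_le_sum[of q UNIV g] by simp
  ultimately show ?thesis by (intro exI[of _ q]) linarith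
qed


definition V :: "('s \<times> (real^'n)) set \<Rightarrow> (real^'n) set" where
  "V W = {a - a' | i a a'. (i, a) \<in> W \<and> (i, a') \<in> W}"

lemma tie_eq: "tie_space W = {y \<in> UNIV. \<forall>x\<in>span (V W). orthogonal x y}"
proof -
  have "tie_space W = {y. \<forall>x\<in>V W. orthogonal x y}"
    unfolding tie_space_def V_def orthogonal_def by (auto simp: inner_commute)
  also have "\<dots> = {y \<in> UNIV. \<forall>x\<in>span (V W). orthogonal x y}"
  proof -
    have "(\<forall>x\<in>V W. orthogonal x y) \<longleftrightarrow> (\<forall>x\<in>span (V W). orthogonal x y)" for y
      by (meson orthogonal_commute orthogonal_to_span span_base)
    then show ?thesis by auto
  qed
  finally show ?thesis .
qed

lemma dim_tie: "dim (tie_space (W :: ('s \<times> (real^'n::finite)) set)) + dim (V W) = CARD('n)"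
proof -
  have "dim {y \<in> UNIV. \<forall>x\<in>span (V W). orthogonal x y} + dim (span (V W)) = dim (UNIV :: (real^'n) set)"
    by (rule dim_subspace_orthogonal_to_vectors) auto
  then show ?thesis using tie_eq[of W] by simp
qed

lemma subspace_tie: "subspace (tie_space W)"
  unfolding tie_space_def subspace_def by (simp add: inner_add_left)

lemma tie_anti: "W \<subseteq> W' \<Longrightarrow> tie_space W' \<subseteq> tie_space W"
  unfolding tie_space_def by auto



lemma diffs_eq:
  assumes "affine S" "x0 \<in> S"
  shows "diffs S = (\<lambda>x. x - x0) ` S"
proof
  show "diffs S \<subseteq> (\<lambda>x. x - x0) ` S"
  proof
    fix v assume "v \<in> diffs S"
    then obtain x y where v: "v = x - y" "x \<in> S" "y \<in> S" unfolding diffs_def by auto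
    have "x0 + 1 *\<^sub>R (x - y) \<in> S" by (rule mem_affine_3_minus) (use assms v in auto)
    then show "v \<in> (\<lambda>x. x - x0) ` S" using v by (auto intro!: image_eqI[of _ _ "x0 + (x - y)"])
  qed
next
  show "(\<lambda>x. x - x0) ` S \<subseteq> diffs S" unfolding diffs_def using assms by auto
qed

lemma diffs_subspace:
  assumes "affine S" "x0 \<in> S"
  shows "subspace (diffs S)"
  using diffs_eq[OF assms] affine_diffs_subspace_subtract[OF assms] by simp

lemma diffs_add:
  assumes "affine S" "x \<in> S" "v \<in> diffs S"
  shows "x + v \<in> S"
proof -
  obtain p p' where v: "v = p - p'" "p \<in> S" "p' \<in> S" using assms(3) unfolding diffs_def by auto
  have "x + 1 *\<^sub>R (p - p') \<in> S" by (rule mem_affine_3_minus) (use assms v in auto)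
  then show ?thesis using v by simp
qed

lemma diffs_mem: "x \<in> S \<Longrightarrow> y \<in> S \<Longrightarrow> x - y \<in> diffs S"
  unfolding diffs_def by auto

lemma dim_V_upper:
  fixes W :: "('s::finite \<times> (real^'n::finite)) set"
  assumes "finite W" "\<forall>i. (i, r i) \<in> W"
  shows "dim (V W) \<le> card W - CARD('s)"
proof -
  let ?Z = "(\<lambda>i. (i, r i)) ` (UNIV :: 's set)"
  let ?G = "(\<lambda>(i,a). a - r i) ` (W - ?Z)"
  have key: "a - r i \<in> span ?G" if "(i, a) \<in> W" for i a
  proof (cases "(i, a) \<in> ?Z")
    case True then show ?thesis by (auto simp: span_zero)
  next
    case False then show ?thesis using that by (intro span_base) (auto intro!: image_eqI[of _ _ "(i,a)"])
  qed
  have "V W \<subseteq> span ?G"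
  proof
    fix v assume "v \<in> V W"
    then obtain i a a' where v: "v = a - a'" "(i,a)\<in>W" "(i,a')\<in>W" unfolding V_def by auto
    have "(a - r i) - (a' - r i) \<in> span ?G" by (rule span_diff[OF key[OF v(2)] key[OF v(3)]])
    then show "v \<in> span ?G" using v by simp
  qed
  then have "dim (V W) \<le> card ?G" using assms by (intro dim_le_card) auto
  also have "\<dots> \<le> card (W - ?Z)" by (rule card_image_le) (use assms in auto)
  also have "\<dots> = card W - card ?Z" using assms by (intro card_Diff_subset) auto
  also have "card ?Z = CARD('s)" by (rule card_image) (auto simp: inj_on_def)
  finally show ?thesis .
qed

lemma dim_V_lower:
  fixes A :: "'s::finite \<Rightarrow> (real^'n::finite) set"
  assumes gp: "general_position A b" and fin: "\<forall>i. finite (A i)"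
    and r: "\<forall>i. (i, r i) \<in> active A b xi"
    and card: "card (active A b xi) \<le> CARD('n) + CARD('s) + 1"
  shows "card (active A b xi) - CARD('s) \<le> dim (V (active A b xi))"
proof -
  define Act where "Act = active A b xi"
  define lift :: "'s \<times> (real^'n) \<Rightarrow> (real^'s) \<times> (real^'n) \<times> real"
    where "lift = (\<lambda>(i,a). (- axis i 1, a, b i a))"
  have finAct: "finite Act"
    unfolding Act_def by (rule finite_subset[OF active_sub]) (use fin in auto)
  define S0 where "S0 = lift ` Act"
  have inj: "inj_on lift Act"
    unfolding inj_on_def lift_def by (auto simp: axis_eq_axis)
  have cS0: "card S0 = card Act" unfolding S0_def using inj by (simp add: card_image)
  have S0sub: "S0 \<subseteq> lifting_vectors A b"
    unfolding S0_def lift_def lifting_vectors_def Act_def active_def by auto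
  define w :: "(real^'s) \<times> (real^'n) \<times> real" where "w = (\<chi> i. lam A b xi i, xi, -1)"
  have w0: "w \<bullet> x = 0" if xS: "x \<in> S0" for x
  proof -
    obtain p where p: "p \<in> Act" "x = lift p" using xS unfolding S0_def by blast
    obtain i a where "p = (i, a)" by (cases p)
    then have ia: "(i,a) \<in> Act" "x = lift (i,a)" using p by auto
    then have "xi \<bullet> a - b i a = lam A b xi i" unfolding Act_def active_def by auto
    then show ?thesis using ia unfolding w_def lift_def by (simp add: inner_Pair inner_axis)
  qed
  have "span S0 \<subseteq> {x. w \<bullet> x = 0}"
    by (rule span_minimal) (use w0 subspace_hyperplane in auto)
  moreover have "w \<bullet> (0, 0, 1) \<noteq> 0" unfolding w_def by (simp add: inner_Pair)
  ultimately have n01: "(0, 0, 1) \<notin> span S0" by auto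
  have "independent S0"
    using gp S0sub card cS0 n01 unfolding general_position_def Act_def by auto
  then have dimS0: "dim S0 = card Act" using cS0 by (simp add: dim_eq_card_independent)
  define B' where "B' = (\<lambda>(i,a). lift (i,a) - lift (i, r i)) ` Act"
  define Z where "Z = (\<lambda>i. lift (i, r i)) ` (UNIV :: 's set)"
  have rAct: "(i, r i) \<in> Act" for i using r Act_def by auto
  have B'S0: "B' \<subseteq> span S0"
  proof
    fix x assume "x \<in> B'"
    then obtain i a where "(i,a) \<in> Act" "x = lift (i,a) - lift (i, r i)" unfolding B'_def by auto
    moreover have "lift (i,a) \<in> span S0" "lift (i, r i) \<in> span S0"
      using rAct \<open>(i,a) \<in> Act\<close> unfolding S0_def by (auto intro: span_base)
    ultimately show "x \<in> span S0" by (auto intro: span_diff)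
  qed
  obtain K where K: "K \<subseteq> B'" "independent K" "B' \<subseteq> span K" "card K = dim B'"
    by (rule basis_exists)
  have finK: "finite K" using K(2) by (rule finiteI_independent)
  have "B' \<union> Z \<subseteq> span (K \<union> Z)"
    using K(3) span_mono[of K "K \<union> Z"] by (auto intro: span_base)
  then have spBZ: "span (B' \<union> Z) \<subseteq> span (K \<union> Z)"
    by (rule span_minimal[OF _ subspace_span])
  have "S0 \<subseteq> span (B' \<union> Z)"
  proof
    fix x assume "x \<in> S0"
    then obtain p where p: "p \<in> Act" "x = lift p" unfolding S0_def by blast
    obtain i a where "p = (i, a)" by (cases p)
    then have ia: "(i,a) \<in> Act" "x = lift (i,a)" using p by auto
    have "(lift (i,a) - lift (i, r i)) + lift (i, r i) \<in> span (B' \<union> Z)"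
      using ia unfolding B'_def Z_def by (intro span_add span_base) auto
    then show "x \<in> span (B' \<union> Z)" using ia by simp
  qed
  then have "dim S0 \<le> card (K \<union> Z)"
    using spBZ finK by (intro dim_le_card) (auto simp: Z_def)
  also have "\<dots> \<le> card K + card Z" by (rule card_Un_le)
  also have "card Z \<le> CARD('s)" unfolding Z_def by (rule card_image_le) simp
  finally have c1: "card Act \<le> dim B' + CARD('s)" using dimS0 K(4) by linarith
  define \<pi> :: "(real^'s) \<times> (real^'n) \<times> real \<Rightarrow> real^'n" where "\<pi> = (\<lambda>x. fst (snd x))"
  have lin: "linear \<pi>" unfolding \<pi>_def by (rule linearI) auto
  have fst0: "span B' \<subseteq> {x. fst x = 0}"
  proof (rule span_minimal)
    show "B' \<subseteq> {x. fst x = 0}" unfolding B'_def lift_def by auto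
    show "subspace {x :: (real^'s) \<times> (real^'n) \<times> real. fst x = 0}"
      unfolding subspace_def by auto
  qed
  have ker: "x = 0" if xB: "x \<in> span B'" "\<pi> x = 0" for x
  proof (rule ccontr)
    assume "x \<noteq> 0"
    have "fst x = 0" using fst0 xB by auto
    obtain c where x: "x = (0, 0, c)" using \<open>fst x = 0\<close> xB(2) unfolding \<pi>_def
      by (cases x) auto
    have c: "c \<noteq> 0"
    proof
      assume "c = 0"
      then have "x = 0" using x by (simp add: zero_prod_def)
      then show False using \<open>x \<noteq> 0\<close> by simp
    qed
    have "(1 / c) *\<^sub>R x \<in> span B'" using xB(1) by (rule span_mul)
    moreover have "(1 / c) *\<^sub>R x = (0, 0, 1)" using c x by simp
    moreover have "span B' \<subseteq> span S0" by (rule span_minimal[OF B'S0 subspace_span])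
    ultimately have "(0, 0, 1) \<in> span S0" by auto
    then show False using n01 by simp
  qed
  have "inj_on \<pi> (span B')"
  proof (rule inj_onI)
    fix x y assume xy: "x \<in> span B'" "y \<in> span B'" "\<pi> x = \<pi> y"
    have "x - y \<in> span B'" using xy by (intro span_diff)
    moreover have "\<pi> (x - y) = 0" using xy(3) linear_diff[OF lin] by simp
    ultimately have "x - y = 0" by (rule ker)
    then show "x = y" by simp
  qed
  then have "dim (\<pi> ` B') = dim B'" using lin by (simp add: dim_image_eq)
  moreover have "\<pi> ` B' \<subseteq> V Act"
    unfolding B'_def \<pi>_def lift_def V_def using rAct by fastforce
  ultimately have "dim B' \<le> dim (V Act)" using dim_subset by metis
  then show ?thesis using c1 unfolding Act_def by linarith
qed



lemma open_constr:
  fixes \<alpha> \<beta> :: "'c \<Rightarrow> real"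
  assumes "finite C"
  shows "open {t. \<forall>c\<in>C. \<alpha> c + t * \<beta> c < 0}"
proof -
  have "{t. \<forall>c\<in>C. \<alpha> c + t * \<beta> c < 0} = (\<Inter>c\<in>C. {t. \<alpha> c + t * \<beta> c < 0})" by auto
  also have "open \<dots>" using assms
    by (intro open_INT) (auto intro!: open_Collect_less continuous_intros)
  finally show ?thesis .
qed

lemma eps_lemma:
  fixes \<alpha> \<beta> :: "'c \<Rightarrow> real"
  assumes "finite C" "\<forall>c\<in>C. \<alpha> c < 0"
  shows "\<exists>\<epsilon>>0. \<forall>t. \<bar>t\<bar> < \<epsilon> \<longrightarrow> (\<forall>c\<in>C. \<alpha> c + t * \<beta> c < 0)"
proof -
  let ?S = "{t. \<forall>c\<in>C. \<alpha> c + t * \<beta> c < 0}"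
  have "open ?S" using assms(1) by (rule open_constr)
  moreover have "0 \<in> ?S" using assms(2) by auto
  ultimately obtain e where e: "e > 0" "ball 0 e \<subseteq> ?S" by (meson openE)
  show ?thesis
  proof (intro exI[of _ e] conjI allI impI)
    fix t :: real assume "\<bar>t\<bar> < e"
    then have "t \<in> ball 0 e" by (simp add: dist_real_def)
    then show "\<forall>c\<in>C. \<alpha> c + t * \<beta> c < 0" using e by blast
  qed (use e in auto)
qed

lemma ray_lemma:
  fixes \<alpha> \<beta> :: "'c \<Rightarrow> real"
  assumes S_def: "S = {t. \<forall>c\<in>C. \<alpha> c + t * \<beta> c < 0}"
  assumes fin: "finite C" and nz: "0 \<notin> S" and ep: "\<epsilon> > 0" and small: "\<forall>t. 0 < t \<and> t < \<epsilon> \<longrightarrow> t \<in> S"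
  shows "S = {t. 0 < t \<and> ereal t < Sup (ereal ` S)}" and "0 < Sup (ereal ` S)"
proof -
  have interval: "t \<in> S" if "x \<in> S" "y \<in> S" "x \<le> t" "t \<le> y" for x y t
  proof -
    have "\<alpha> c + t * \<beta> c < 0" if c: "c \<in> C" for c
    proof (cases "\<beta> c \<ge> 0")
      case True
      then have "t * \<beta> c \<le> y * \<beta> c" using \<open>t \<le> y\<close> by (rule mult_right_mono[rotated])
      moreover have "\<alpha> c + y * \<beta> c < 0" using \<open>y \<in> S\<close> c unfolding S_def by auto
      ultimately show ?thesis by linarith
    next
      case False
      then have "t * \<beta> c \<le> x * \<beta> c" using \<open>x \<le> t\<close> by (intro mult_right_mono_neg) auto
      moreover have "\<alpha> c + x * \<beta> c < 0" using \<open>x \<in> S\<close> c unfolding S_def by auto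
      ultimately show ?thesis by linarith
    qed
    then show ?thesis unfolding S_def by auto
  qed
  have op: "open S" unfolding S_def using fin by (rule open_constr)
  have e2: "\<epsilon> / 2 \<in> S" using small ep by auto
  have pos: "0 < t" if "t \<in> S" for t
  proof (rule ccontr)
    assume "\<not> 0 < t"
    then have "t \<le> 0" by simp
    then have "0 \<in> S" using interval[OF that e2, of 0] ep by auto
    then show False using nz by simp
  qed
  have up: "ereal t < Sup (ereal ` S)" if tS: "t \<in> S" for t
  proof -
    obtain e where e: "e > 0" "ball t e \<subseteq> S" using op tS by (meson openE)
    have "t + e/2 \<in> ball t e" using e by (simp add: dist_real_def)
    then have "t + e/2 \<in> S" using e by blast
    then have "ereal (t + e/2) \<le> Sup (ereal ` S)" by (intro Sup_upper) auto
    moreover have "ereal t < ereal (t + e/2)" using e by simp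
    ultimately show ?thesis by order
  qed
  have down: "t \<in> S" if tt: "0 < t" "ereal t < Sup (ereal ` S)" for t
  proof -
    obtain s where s: "s \<in> S" "ereal t < ereal s" using tt(2) by (auto simp: less_Sup_iff)
    show ?thesis
    proof (cases "t < \<epsilon>")
      case True then show ?thesis using small tt by auto
    next
      case False
      then show ?thesis using interval[OF e2 s(1), of t] s(2) ep by auto
    qed
  qed
  show "S = {t. 0 < t \<and> ereal t < Sup (ereal ` S)}" using pos up down by auto
  have "ereal (\<epsilon>/2) \<le> Sup (ereal ` S)" using e2 by (intro Sup_upper) auto
  moreover have "0 < ereal (\<epsilon>/2)" using ep by simp
  ultimately show "0 < Sup (ereal ` S)" by order
qed



lemma main_q:
  fixes A :: "'s::finite \<Rightarrow> (real^'n::finite) set"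
    and b :: "'s \<Rightarrow> real^'n \<Rightarrow> real"
    and md :: "nat \<Rightarrow> 's \<Rightarrow> nat"
    and F :: "nat \<Rightarrow> (real^'n) set"
  assumes gp: "general_position A b"
    and fin: "\<forall>i. finite (A i) \<and> A i \<noteq> {}"
    and aff: "affine (F d)" and xiF: "xi \<in> F d"
    and gen: "\<forall>W \<subseteq> Sigma UNIV A. dim (diffs (F d) \<inter> tie_space W) = d + dim (tie_space W) - CARD('n)"
    and dn: "d \<le> CARD('n)" "1 \<le> d"
    and mq: "mult_at A b xi q = md (d - 1) q + 1"
    and mo: "\<forall>i. i \<noteq> q \<longrightarrow> mult_at A b xi i = md (d - 1) i"
    and smult: "(\<Sum>i\<in>UNIV. mult_at A b xi i) = d"
  shows "\<exists>QQ E (Delta :: real^'n \<Rightarrow> real^'n) (I :: real^'n \<Rightarrow> ereal).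
           finite QQ \<and> card QQ = md (d - 1) q + 2 \<and>
           {E. is_edge A b F md d E \<and> is_endpoint xi E} = E ` QQ \<and> inj_on E QQ \<and>
           (\<forall>a\<in>QQ. 0 < I a \<and> E a = {xi + t *\<^sub>R Delta a | t. 0 < t \<and> ereal t < I a}) \<and>
           (\<Sum>a\<in>QQ. Delta a) = 0"
proof -
  have finA: "finite (A i)" and neA: "A i \<noteq> {}" for i using fin by auto
  define D where "D = diffs (F d)"
  have subD: "subspace D" unfolding D_def using diffs_subspace[OF aff xiF] .
  define Act where "Act = active A b xi"
  define Q where "Q i = {a \<in> A i. (i,a) \<in> Act}" for i
  have cardQ: "card (Q i) = mult_at A b xi i + 1" for i
    unfolding Q_def Act_def by (rule card_active[of A i, OF finA neA])
  have finQ: "finite (Q i)" for i unfolding Q_def using finA by auto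
  have ActSig: "Act = Sigma UNIV Q" unfolding Q_def Act_def using active_sub by blast
  have QAct: "(i,x) \<in> Act \<longleftrightarrow> x \<in> Q i" for i x using ActSig by auto
  have finAct: "finite Act" unfolding ActSig using finQ by simp
  have cardAct: "card Act = d + CARD('s)"
  proof -
    have "card Act = (\<Sum>i\<in>UNIV. card (Q i))" unfolding ActSig using finQ by (simp add: card_SigmaI)
    also have "\<dots> = (\<Sum>i\<in>UNIV. mult_at A b xi i + 1)" using cardQ by simp
    also have "\<dots> = d + CARD('s)" using smult by (simp add: sum_Suc)
    finally show ?thesis .
  qed
  have neQ: "Q i \<noteq> {}" for i using cardQ[of i] by auto
  define r where "r i = (SOME x. x \<in> Q i)" for i
  have rQ: "r i \<in> Q i" for i unfolding r_def using neQ[of i] by (simp add: some_in_eq)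
  have fval: "xi \<bullet> x - b i x = lam A b xi i" if "(i,x) \<in> Act" for i x
    using that unfolding Act_def active_def by auto
  have ActA: "x \<in> A i" if "(i,x) \<in> Act" for i x using that active_sub unfolding Act_def by blast
  have "card Act - CARD('s) \<le> dim (V Act)" unfolding Act_def
    by (rule dim_V_lower[OF gp, of r]) (use fin rQ QAct cardAct dn in \<open>auto simp: Act_def\<close>)
  then have dVA: "d \<le> dim (V Act)" using cardAct by simp
  have dTA: "dim (tie_space Act) + dim (V Act) = CARD('n)" by (rule dim_tie)
  have ActS: "Act \<subseteq> Sigma UNIV A" using ActA by auto
  have "dim (D \<inter> tie_space Act) = d + dim (tie_space Act) - CARD('n)"
    using gen[rule_format, OF ActS] unfolding D_def .
  then have "dim (D \<inter> tie_space Act) = 0" using dVA dTA dn by linarith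
  then have Z0: "v = 0" if "v \<in> D" "v \<in> tie_space Act" for v using that by (auto simp: dim_eq_0)

  define QQ where "QQ = Q q"
  define k where "k = md (d - 1) q + 2"
  have cQQ: "card QQ = k" unfolding QQ_def k_def using cardQ[of q] mq by simp
  have finQQ: "finite QQ" unfolding QQ_def by (rule finQ)
  have QQAct: "(q,x) \<in> Act \<longleftrightarrow> x \<in> QQ" for x unfolding QQ_def using QAct by simp
  have other: "\<exists>a'. a' \<in> QQ \<and> a' \<noteq> a" for a
  proof (rule ccontr)
    assume "\<not> (\<exists>a'. a' \<in> QQ \<and> a' \<noteq> a)"
    then have "QQ \<subseteq> {a}" by auto
    then have "card QQ \<le> card {a}" by (intro card_mono) auto
    then show False using cQQ k_def by simp
  qed
  define W where "W a = Act - {(q,a)}" for a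
  have WAct: "W a \<subseteq> Act" for a unfolding W_def by auto
  have ext: "v \<in> tie_space Act"
    if ext1: "a \<in> QQ" "a' \<in> QQ" "a' \<noteq> a" "v \<in> tie_space (W a)" "v \<bullet> (a - a') = 0" for v a a'
  proof -
    have tw: "v \<bullet> (x - y) = 0" if "(i,x) \<in> W a" "(i,y) \<in> W a" for i x y
      using ext1(4) that unfolding tie_space_def by blast
    have a'W: "(q,a') \<in> W a" using ext1 QQAct unfolding W_def by auto
    have main: "v \<bullet> (x - y) = 0" if m: "(i,x) \<in> Act" "(i,y) \<in> Act" for i x y
    proof -
      have eq: "v \<bullet> (x - y) = v \<bullet> x - v \<bullet> y" "v \<bullet> (a - a') = v \<bullet> a - v \<bullet> a'" by (simp_all add: inner_diff_right)
      consider "(i,x) \<in> W a" "(i,y) \<in> W a" | "(i,x) = (q,a)" | "(i,y) = (q,a)"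
        using m unfolding W_def by auto
      then show ?thesis
      proof cases
        case 1 then show ?thesis by (rule tw)
      next
        case 2
        show ?thesis
        proof (cases "y = a")
          case True then show ?thesis using 2 by simp
        next
          case False
          then have "(q,y) \<in> W a" using m 2 unfolding W_def by auto
          then have "v \<bullet> (a' - y) = 0" using a'W tw by blast
          then show ?thesis using 2 eq ext1(5) by (simp add: inner_diff_right)
        qed
      next
        case 3
        show ?thesis
        proof (cases "x = a")
          case True then show ?thesis using 3 by simp
        next
          case False
          then have "(q,x) \<in> W a" using m 3 unfolding W_def by auto
          then have "v \<bullet> (x - a') = 0" using a'W tw by blast
          then show ?thesis using 3 eq ext1(5) by (simp add: inner_diff_right)
        qed
      qed
    qed
    then show ?thesis unfolding tie_space_def by blast
  qed
  have exDelta: "\<exists>\<Delta>. \<Delta> \<in> D \<and> \<Delta> \<in> tie_space (W a) \<and> (\<forall>y\<in>QQ - {a}. \<Delta> \<bullet> (a - y) = -1)"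
    if aQ: "a \<in> QQ" for a
  proof -
    obtain a' where a': "a' \<in> QQ" "a' \<noteq> a" using other by blast
    define r' where "r' i = (if i = q then a' else r i)" for i
    have r'W: "\<forall>i. (i, r' i) \<in> W a" using a' rQ QAct QQAct unfolding r'_def W_def by auto
    have aAct: "(q,a) \<in> Act" using aQ QQAct by simp
    have cardW: "card (W a) = d + CARD('s) - 1"
      unfolding W_def using aAct finAct cardAct by (simp add: card_Diff_singleton)
    have finW: "finite (W a)" unfolding W_def using finAct by simp
    have "dim (V (W a)) \<le> card (W a) - CARD('s)" by (rule dim_V_upper[OF finW r'W])
    then have dV: "dim (V (W a)) \<le> d - 1" using cardW by simp
    have dT: "dim (tie_space (W a)) + dim (V (W a)) = CARD('n)" by (rule dim_tie)
    have "W a \<subseteq> Sigma UNIV A" using WAct ActA by auto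
    then have "dim (D \<inter> tie_space (W a)) = d + dim (tie_space (W a)) - CARD('n)"
      using gen[rule_format] unfolding D_def by blast
    then have "dim (D \<inter> tie_space (W a)) \<noteq> 0" using dV dT dn by linarith
    then obtain v where v: "v \<in> D" "v \<in> tie_space (W a)" "v \<noteq> 0" by (auto simp: dim_eq_0)
    define c where "c = v \<bullet> (a - a')"
    have c0: "c \<noteq> 0"
    proof
      assume "c = 0"
      then have "v \<in> tie_space Act" using ext[OF aQ a'(1) a'(2) v(2)] c_def by simp
      then show False using Z0 v by blast
    qed
    define \<Delta> where "\<Delta> = (- 1 / c) *\<^sub>R v"
    have "\<Delta> \<in> D" unfolding \<Delta>_def using subD v(1) by (rule subspace_scale)
    moreover have \<Delta>t: "\<Delta> \<in> tie_space (W a)" unfolding \<Delta>_def using subspace_tie v(2) by (rule subspace_scale)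
    moreover have "\<forall>y\<in>QQ - {a}. \<Delta> \<bullet> (a - y) = -1"
    proof
      fix y assume y: "y \<in> QQ - {a}"
      then have "(q,y) \<in> W a" using QQAct unfolding W_def by auto
      then have "\<Delta> \<bullet> (a' - y) = 0" using \<Delta>t r'W[rule_format, of q] unfolding tie_space_def r'_def by auto
      moreover have "\<Delta> \<bullet> (a - a') = -1" unfolding \<Delta>_def using c0 c_def by simp
      moreover have "\<Delta> \<bullet> (a - y) = \<Delta> \<bullet> (a - a') + \<Delta> \<bullet> (a' - y)" by (simp add: inner_diff_right)
      ultimately show "\<Delta> \<bullet> (a - y) = -1" by simp
    qed
    ultimately show ?thesis by blast
  qed
  define Delta where "Delta a = (SOME \<Delta>. \<Delta> \<in> D \<and> \<Delta> \<in> tie_space (W a) \<and> (\<forall>y\<in>QQ - {a}. \<Delta> \<bullet> (a - y) = -1))" for a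
  have DeltaP: "Delta a \<in> D \<and> Delta a \<in> tie_space (W a) \<and> (\<forall>y\<in>QQ - {a}. Delta a \<bullet> (a - y) = -1)"
    if "a \<in> QQ" for a
    unfolding Delta_def by (rule someI_ex) (rule exDelta[OF that])
  have uniq: "u = (- (u \<bullet> (a - y))) *\<^sub>R Delta a"
    if u: "a \<in> QQ" "y \<in> QQ" "y \<noteq> a" "u \<in> D" "u \<in> tie_space (W a)" for u a y
  proof -
    define t where "t = - (u \<bullet> (a - y))"
    have "u - t *\<^sub>R Delta a \<in> D" using subD u(4) DeltaP[OF u(1)] by (intro subspace_diff subspace_scale) auto
    moreover have "u - t *\<^sub>R Delta a \<in> tie_space (W a)"
      using subspace_tie u(5) DeltaP[OF u(1)] by (intro subspace_diff subspace_scale) auto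
    moreover have "(u - t *\<^sub>R Delta a) \<bullet> (a - y) = 0"
    proof -
      have dy: "Delta a \<bullet> (a - y) = -1" using DeltaP[OF u(1)] u(2,3) by auto
      have "(u - t *\<^sub>R Delta a) \<bullet> (a - y) = u \<bullet> (a - y) - t * (Delta a \<bullet> (a - y))"
        by (simp add: inner_diff_left)
      then show ?thesis using dy unfolding t_def by simp
    qed
    ultimately have "u - t *\<^sub>R Delta a \<in> tie_space Act" using ext[OF u(1) u(2) u(3)] by blast
    then have "u - t *\<^sub>R Delta a = 0" using Z0 \<open>u - t *\<^sub>R Delta a \<in> D\<close> by blast
    then show ?thesis unfolding t_def by (simp add: eq_neg_iff_add_eq_0)
  qed
  have Dnz: "Delta a \<noteq> 0" if aQQ: "a \<in> QQ" for a
  proof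
    assume "Delta a = 0"
    obtain a' where "a' \<in> QQ" "a' \<noteq> a" using other by blast
    then show False using DeltaP[OF aQQ] \<open>Delta a = 0\<close> by auto
  qed

  have actI: "(i,x) \<in> active A b \<eta>' \<longleftrightarrow> x \<in> A i \<and> (\<forall>y\<in>A i. \<eta>' \<bullet> y - b i y \<le> \<eta>' \<bullet> x - b i x)"
    for i x \<eta>' by (rule active_iff[of A i, OF finA])
  define rep where "rep a i = (if i = q then (SOME y. y \<in> QQ \<and> y \<noteq> a) else r i)" for a i
  have repW: "(i, rep a i) \<in> W a" if aQ: "a \<in> QQ" for a i
  proof (cases "i = q")
    case True
    have "rep a i \<in> QQ \<and> rep a i \<noteq> a" unfolding rep_def using True someI_ex[OF other[of a]] by simp
    then show ?thesis using True QQAct unfolding W_def by auto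
  next
    case False
    then show ?thesis using rQ QAct unfolding rep_def W_def by auto
  qed
  have repA: "rep a i \<in> A i" if "a \<in> QQ" for a i using repW[OF that] WAct ActA by blast
  define C where "C a = Sigma UNIV A - W a" for a
  have finC: "finite (C a)" for a unfolding C_def using finA by auto
  define \<alpha> where "\<alpha> a = (\<lambda>(i,x). (xi \<bullet> x - b i x) - (xi \<bullet> rep a i - b i (rep a i)))" for a
  define \<beta> where "\<beta> a = (\<lambda>(i,x). Delta a \<bullet> x - Delta a \<bullet> rep a i)" for a
  define T where "T a = {t. active A b (xi + t *\<^sub>R Delta a) = W a}" for a
  have Tchar: "T a = {t. \<forall>c\<in>C a. \<alpha> a c + t * \<beta> a c < 0}" if aQ: "a \<in> QQ" for a
  proof -
    have key: "active A b (xi + t *\<^sub>R Delta a) = W a \<longleftrightarrow> (\<forall>c\<in>C a. \<alpha> a c + t * \<beta> a c < 0)" for t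
    proof -
      define \<eta> where "\<eta> = xi + t *\<^sub>R Delta a"
      have f\<eta>: "\<eta> \<bullet> x - b i x = (xi \<bullet> x - b i x) + t * (Delta a \<bullet> x)" for i x
        unfolding \<eta>_def by (simp add: inner_add_left)
      have diffeq: "(\<eta> \<bullet> x - b i x) - (\<eta> \<bullet> rep a i - b i (rep a i)) = \<alpha> a (i,x) + t * \<beta> a (i,x)" for i x
        unfolding \<alpha>_def \<beta>_def by (simp add: f\<eta> algebra_simps)
      have tieq: "\<eta> \<bullet> x - b i x = \<eta> \<bullet> rep a i - b i (rep a i)" if xW: "(i,x) \<in> W a" for i x
      proof -
        have "(i,x) \<in> Act" "(i, rep a i) \<in> Act" using xW repW[OF aQ] WAct by auto
        then have e1: "xi \<bullet> x - b i x = xi \<bullet> rep a i - b i (rep a i)" using fval by simp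
        have "Delta a \<bullet> (x - rep a i) = 0" using DeltaP[OF aQ] xW repW[OF aQ] unfolding tie_space_def by blast
        then have e2: "Delta a \<bullet> x = Delta a \<bullet> rep a i" by (simp add: inner_diff_right)
        show ?thesis using e1 e2 f\<eta>[of x i] f\<eta>[of "rep a i" i] by simp
      qed
      show ?thesis
      proof
        assume H: "active A b (xi + t *\<^sub>R Delta a) = W a"
        show "\<forall>c\<in>C a. \<alpha> a c + t * \<beta> a c < 0"
        proof
          fix c assume "c \<in> C a"
          then obtain i x where c: "c = (i,x)" "x \<in> A i" "(i,x) \<notin> W a" unfolding C_def by auto
          have ra: "(i, rep a i) \<in> active A b \<eta>" using H repW[OF aQ] \<eta>_def by simp
          then have le: "\<eta> \<bullet> x - b i x \<le> \<eta> \<bullet> rep a i - b i (rep a i)" using actI c by blast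
          have "\<eta> \<bullet> x - b i x \<noteq> \<eta> \<bullet> rep a i - b i (rep a i)"
          proof
            assume eq: "\<eta> \<bullet> x - b i x = \<eta> \<bullet> rep a i - b i (rep a i)"
            have "(i,x) \<in> active A b \<eta>" using ra c(2) eq unfolding actI by simp
            then show False using H c \<eta>_def by simp
          qed
          then show "\<alpha> a c + t * \<beta> a c < 0" using le diffeq[of x i] c by simp
        qed
      next
        assume H: "\<forall>c\<in>C a. \<alpha> a c + t * \<beta> a c < 0"
        have lt: "\<eta> \<bullet> x - b i x < \<eta> \<bullet> rep a i - b i (rep a i)" if "x \<in> A i" "(i,x) \<notin> W a" for i x
        proof -
          have "(i,x) \<in> C a" unfolding C_def using that by auto
          then have "\<alpha> a (i,x) + t * \<beta> a (i,x) < 0" using H by blast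
          then show ?thesis using diffeq[of x i] by simp
        qed
        show "active A b (xi + t *\<^sub>R Delta a) = W a"
        proof (rule set_eqI)
          fix p :: "'s \<times> (real^'n)"
          obtain i x where p: "p = (i,x)" by (cases p)
          have "(i,x) \<in> active A b \<eta> \<longleftrightarrow> (i,x) \<in> W a"
          proof
            assume "(i,x) \<in> active A b \<eta>"
            then have "x \<in> A i" "\<eta> \<bullet> rep a i - b i (rep a i) \<le> \<eta> \<bullet> x - b i x"
              using actI repA[OF aQ] by auto
            then show "(i,x) \<in> W a" using lt by force
          next
            assume xW: "(i,x) \<in> W a"
            then have xA: "x \<in> A i" using WAct ActA by blast
            have "\<forall>y\<in>A i. \<eta> \<bullet> y - b i y \<le> \<eta> \<bullet> x - b i x"
            proof
              fix y assume yA: "y \<in> A i"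
              show "\<eta> \<bullet> y - b i y \<le> \<eta> \<bullet> x - b i x"
              proof (cases "(i,y) \<in> W a")
                case True then show ?thesis using tieq[OF xW] tieq[OF True] by simp
              next
                case False then show ?thesis using tieq[OF xW] lt[OF yA False] by simp
              qed
            qed
            then show "(i,x) \<in> active A b \<eta>" using actI xA by blast
          qed
          then show "p \<in> active A b (xi + t *\<^sub>R Delta a) \<longleftrightarrow> p \<in> W a" using p \<eta>_def by simp
        qed
      qed
    qed
    then show ?thesis unfolding T_def by auto
  qed
  have Tsmall: "\<exists>\<epsilon>>0. \<forall>t. 0 < t \<and> t < \<epsilon> \<longrightarrow> t \<in> T a" if aQ: "a \<in> QQ" for a
  proof -
    let ?C' = "C a - {(q,a)}"
    have neg: "\<forall>c\<in>?C'. \<alpha> a c < 0"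
    proof
      fix c assume "c \<in> ?C'"
      then obtain i x where c: "c = (i,x)" "x \<in> A i" "(i,x) \<notin> W a" "(i,x) \<noteq> (q,a)" unfolding C_def by auto
      then have nA: "(i,x) \<notin> Act" unfolding W_def by auto
      have "xi \<bullet> x - b i x \<le> lam A b xi i" by (rule lam_ge[of A i]) (use finA c in auto)
      moreover have "xi \<bullet> x - b i x \<noteq> lam A b xi i" using nA c(2) unfolding Act_def active_def by auto
      moreover have "xi \<bullet> rep a i - b i (rep a i) = lam A b xi i" using fval repW[OF aQ] WAct by blast
      ultimately show "\<alpha> a c < 0" unfolding \<alpha>_def c by simp
    qed
    have finC': "finite ?C'" using finC by simp
    obtain \<epsilon> where \<epsilon>: "\<epsilon> > 0" "\<forall>t. \<bar>t\<bar> < \<epsilon> \<longrightarrow> (\<forall>c\<in>?C'. \<alpha> a c + t * \<beta> a c < 0)"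
      using eps_lemma[OF finC' neg, of "\<beta> a"] by blast
    have rq: "rep a q \<in> QQ - {a}" using repW[OF aQ, of q] QQAct unfolding W_def by auto
    have special: "\<alpha> a (q,a) + t * \<beta> a (q,a) = -t" for t
    proof -
      have "\<alpha> a (q,a) = 0" using fval[of q a] fval[of q "rep a q"] QQAct aQ rq unfolding \<alpha>_def by simp
      moreover have "\<beta> a (q,a) = -1" using DeltaP[OF aQ] rq unfolding \<beta>_def by (simp add: inner_diff_right)
      ultimately show ?thesis by simp
    qed
    have "t \<in> T a" if tt: "0 < t" "t < \<epsilon>" for t
    proof -
      have "\<forall>c\<in>C a. \<alpha> a c + t * \<beta> a c < 0"
      proof
        fix c assume cC: "c \<in> C a"
        show "\<alpha> a c + t * \<beta> a c < 0"
        proof (cases "c = (q,a)")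
          case True then show ?thesis using special tt by simp
        next
          case False then show ?thesis using \<epsilon>(2) tt cC by auto
        qed
      qed
      then show ?thesis using Tchar[OF aQ] by simp
    qed
    then show ?thesis using \<epsilon>(1) by blast
  qed
  define eps where "eps a = (SOME \<epsilon>. \<epsilon> > 0 \<and> (\<forall>t. 0 < t \<and> t < \<epsilon> \<longrightarrow> t \<in> T a))" for a
  have epsP: "eps a > 0 \<and> (\<forall>t. 0 < t \<and> t < eps a \<longrightarrow> t \<in> T a)" if "a \<in> QQ" for a
    unfolding eps_def by (rule someI_ex) (use Tsmall[OF that] in auto)
  have T0: "0 \<notin> T a" if "a \<in> QQ" for a
  proof
    assume "0 \<in> T a"
    then have "Act = W a" unfolding T_def Act_def by simp
    moreover have "(q,a) \<in> Act" using that QQAct by simp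
    ultimately show False unfolding W_def by auto
  qed
  define I where "I a = Sup (ereal ` T a)" for a
  have Tray: "T a = {t. 0 < t \<and> ereal t < I a}" and Ipos: "0 < I a" if aQ: "a \<in> QQ" for a
    using ray_lemma[OF Tchar[OF aQ] finC T0[OF aQ], of "eps a"] epsP[OF aQ] unfolding I_def by auto
  define E where "E a = {\<eta> \<in> F d. active A b \<eta> = W a}" for a
  have ET: "E a = (\<lambda>t. xi + t *\<^sub>R Delta a) ` T a" if aQ: "a \<in> QQ" for a
  proof
    show "(\<lambda>t. xi + t *\<^sub>R Delta a) ` T a \<subseteq> E a"
    proof
      fix p assume "p \<in> (\<lambda>t. xi + t *\<^sub>R Delta a) ` T a"
      then obtain t where t: "t \<in> T a" "p = xi + t *\<^sub>R Delta a" by blast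
      have "t *\<^sub>R Delta a \<in> D" using subD DeltaP[OF aQ] by (intro subspace_scale) auto
      then have "p \<in> F d" using diffs_add[OF aff xiF] t(2) unfolding D_def by simp
      then show "p \<in> E a" using t unfolding E_def T_def by simp
    qed
    show "E a \<subseteq> (\<lambda>t. xi + t *\<^sub>R Delta a) ` T a"
    proof
      fix \<eta> assume "\<eta> \<in> E a"
      then have \<eta>: "\<eta> \<in> F d" "active A b \<eta> = W a" unfolding E_def by auto
      define u where "u = \<eta> - xi"
      have uD: "u \<in> D" unfolding u_def D_def using \<eta>(1) xiF by (rule diffs_mem)
      have "u \<bullet> (x - y) = 0" if xy: "(i,x) \<in> W a" "(i,y) \<in> W a" for i x y
      proof -
        have "(i,x) \<in> active A b \<eta>" "(i,y) \<in> active A b \<eta>" using xy \<eta>(2) by auto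
        then have e1: "\<eta> \<bullet> x - b i x = \<eta> \<bullet> y - b i y" unfolding active_def by auto
        have "(i,x) \<in> Act" "(i,y) \<in> Act" using xy WAct by auto
        then have e2: "xi \<bullet> x - b i x = xi \<bullet> y - b i y" using fval by simp
        show ?thesis unfolding u_def using e1 e2 by (simp add: inner_diff_left inner_diff_right)
      qed
      then have uT: "u \<in> tie_space (W a)" unfolding tie_space_def by blast
      obtain y where y: "y \<in> QQ" "y \<noteq> a" using other by blast
      have "u = (- (u \<bullet> (a - y))) *\<^sub>R Delta a" by (rule uniq[OF aQ y uD uT])
      then have "\<eta> = xi + (- (u \<bullet> (a - y))) *\<^sub>R Delta a" unfolding u_def by (simp add: algebra_simps)
      moreover have "(- (u \<bullet> (a - y))) \<in> T a" using \<eta>(2) calculation unfolding T_def by simp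
      ultimately show "\<eta> \<in> (\<lambda>t. xi + t *\<^sub>R Delta a) ` T a" by blast
    qed
  qed
  have Eray: "E a = {xi + t *\<^sub>R Delta a | t. 0 < t \<and> ereal t < I a}" if aQ: "a \<in> QQ" for a
    unfolding ET[OF aQ] Tray[OF aQ] by auto

  have fromray: "xi + t *\<^sub>R Delta a \<in> E a" if "a \<in> QQ" "0 < t" "t < eps a" for a t
    using ET[OF that(1)] epsP[OF that(1)] that(2,3) by blast
  have Eedge: "is_edge A b F md d (E a)" if aQ: "a \<in> QQ" for a
  proof -
    have cardc: "\<forall>i. card {x \<in> A i. (i,x) \<in> W a} = md (d - 1) i + 1"
    proof
      fix i
      show "card {x \<in> A i. (i,x) \<in> W a} = md (d - 1) i + 1"
      proof (cases "i = q")
        case True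
        then have "{x \<in> A i. (i,x) \<in> W a} = QQ - {a}" unfolding W_def QQ_def Q_def by auto
        then show ?thesis using True cQQ aQ finQQ k_def by (simp add: card_Diff_singleton)
      next
        case False
        then have "{x \<in> A i. (i,x) \<in> W a} = Q i" unfolding W_def Q_def by auto
        then show ?thesis using cardQ[of i] mo False by simp
      qed
    qed
    have aff1: "aff_dim (E a) = 1"
    proof -
      have dn0: "Delta a \<noteq> 0" using Dnz aQ by simp
      have "E a \<subseteq> affine hull {xi, xi + Delta a}"
      proof
        fix p assume "p \<in> E a"
        then obtain t where pt: "p = xi + t *\<^sub>R Delta a" using ET[OF aQ] by auto
        have "\<exists>u v. p = u *\<^sub>R xi + v *\<^sub>R (xi + Delta a) \<and> u + v = 1"
          by (rule exI[of _ "1 - t"], rule exI[of _ t]) (simp add: pt algebra_simps)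
        then show "p \<in> affine hull {xi, xi + Delta a}" unfolding affine_hull_2 by simp
      qed
      then have "aff_dim (E a) \<le> aff_dim (affine hull {xi, xi + Delta a})" by (rule aff_dim_subset)
      also have "\<dots> = 1" using dn0 by (simp add: aff_dim_affine_hull)
      finally have le: "aff_dim (E a) \<le> 1" .
      have ep: "eps a > 0" using epsP[OF aQ] by simp
      have p1: "xi + (eps a / 2) *\<^sub>R Delta a \<in> E a" using fromray[OF aQ] ep by simp
      have p2: "xi + (eps a / 4) *\<^sub>R Delta a \<in> E a" using fromray[OF aQ] ep by simp
      have "xi + (eps a / 2) *\<^sub>R Delta a \<noteq> xi + (eps a / 4) *\<^sub>R Delta a" using dn0 ep by simp
      then have "aff_dim {xi + (eps a / 2) *\<^sub>R Delta a, xi + (eps a / 4) *\<^sub>R Delta a} = 1" by simp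
      moreover have "aff_dim {xi + (eps a / 2) *\<^sub>R Delta a, xi + (eps a / 4) *\<^sub>R Delta a} \<le> aff_dim (E a)"
        using p1 p2 by (intro aff_dim_subset) auto
      ultimately show ?thesis using le by linarith
    qed
    show ?thesis unfolding is_edge_def using cardc aff1 E_def by blast
  qed
  have Eend: "is_endpoint xi (E a)" if aQ: "a \<in> QQ" for a
  proof -
    have "xi \<notin> E a"
    proof
      assume "xi \<in> E a"
      then have "Act = W a" unfolding E_def Act_def by simp
      moreover have "(q,a) \<in> Act" using aQ QQAct by simp
      ultimately show False unfolding W_def by auto
    qed
    moreover have "xi \<in> closure (E a)"
      unfolding closure_approachable
    proof (intro allI impI)
      fix e :: real assume e: "e > 0"
      have n0: "norm (Delta a) > 0" using Dnz aQ by simp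
      have ep: "eps a > 0" using epsP[OF aQ] by simp
      define t where "t = min (eps a / 2) (e / (2 * norm (Delta a)))"
      have t0: "0 < t" "t < eps a" using ep e n0 by (auto simp: t_def)
      have "t * norm (Delta a) \<le> (e / (2 * norm (Delta a))) * norm (Delta a)"
        using n0 by (intro mult_right_mono) (auto simp: t_def)
      also have "\<dots> = e/2" using n0 by simp
      finally have "dist (xi + t *\<^sub>R Delta a) xi < e" using e t0 by (simp add: dist_norm)
      then show "\<exists>y\<in>E a. dist y xi < e" using fromray[OF aQ t0] by blast
    qed
    ultimately show ?thesis unfolding is_endpoint_def by simp
  qed
  have Eall: "\<exists>a\<in>QQ. Ed = E a" if Ed: "is_edge A b F md d Ed" "is_endpoint xi Ed" for Ed
  proof -
    obtain W' where W': "\<forall>i. card {x \<in> A i. (i,x) \<in> W'} = md (d - 1) i + 1"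
        "Ed = {\<eta> \<in> F d. active A b \<eta> = W'}" "aff_dim Ed = 1"
      using Ed(1) unfolding is_edge_def by blast
    have "Ed \<noteq> {}" using W'(3) by auto
    then obtain \<eta>0 where "\<eta>0 \<in> Ed" by blast
    then have W'S: "W' \<subseteq> Sigma UNIV A" using W'(2) active_sub by blast
    have xicl: "xi \<in> closure Ed" using Ed(2) unfolding is_endpoint_def by auto
    have W'Act: "W' \<subseteq> Act"
    proof
      fix p assume pW: "p \<in> W'"
      obtain i x where p: "p = (i,x)" by (cases p)
      have xA: "x \<in> A i" using pW p W'S by auto
      let ?Cl = "\<Inter>y\<in>A i. {\<eta>. \<eta> \<bullet> y - b i y \<le> \<eta> \<bullet> x - b i x}"
      have "closed ?Cl" by (intro closed_INT ballI closed_Collect_le continuous_intros)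
      moreover have "Ed \<subseteq> ?Cl" using W'(2) pW p actI by auto
      ultimately have "closure Ed \<subseteq> ?Cl" by (rule closure_minimal[rotated])
      then have "xi \<in> ?Cl" using xicl by auto
      then show "p \<in> Act" unfolding p Act_def using actI xA by auto
    qed
    define Wq where "Wq = {x \<in> A q. (q,x) \<in> W'}"
    have WqQ: "Wq \<subseteq> QQ" using W'Act QQAct unfolding Wq_def by auto
    have cWq: "card Wq = k - 1" using W'(1) k_def unfolding Wq_def by simp
    have "\<not> QQ \<subseteq> Wq"
    proof
      assume "QQ \<subseteq> Wq"
      then have "card QQ \<le> card Wq" using finQQ WqQ by (intro card_mono) (auto intro: finite_subset)
      then show False using cQQ cWq k_def by simp
    qed
    then obtain a where a: "a \<in> QQ" "a \<notin> Wq" by blast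
    have WqE: "Wq = QQ - {a}"
    proof (rule card_subset_eq)
      show "finite (QQ - {a})" using finQQ by simp
      show "Wq \<subseteq> QQ - {a}" using WqQ a by auto
      show "card Wq = card (QQ - {a})" using cWq cQQ a finQQ by (simp add: card_Diff_singleton)
    qed
    have Wi: "{x \<in> A i. (i,x) \<in> W'} = Q i" if iq: "i \<noteq> q" for i
    proof (rule card_subset_eq)
      show "finite (Q i)" by (rule finQ)
      show "{x \<in> A i. (i,x) \<in> W'} \<subseteq> Q i" using W'Act QAct by auto
      show "card {x \<in> A i. (i,x) \<in> W'} = card (Q i)" using W'(1) cardQ[of i] mo iq by simp
    qed
    have "W' = W a"
    proof (rule set_eqI)
      fix p :: "'s \<times> (real^'n)"
      obtain i x where p: "p = (i,x)" by (cases p)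
      have 1: "(i,x) \<in> W' \<longleftrightarrow> x \<in> {x \<in> A i. (i,x) \<in> W'}" using W'S by auto
      have "(i,x) \<in> W' \<longleftrightarrow> (i,x) \<in> W a"
      proof (cases "i = q")
        case True
        then have "(i,x) \<in> W' \<longleftrightarrow> x \<in> QQ - {a}" using 1 WqE unfolding Wq_def by simp
        then show ?thesis using True QQAct unfolding W_def by auto
      next
        case False
        then have "(i,x) \<in> W' \<longleftrightarrow> x \<in> Q i" using 1 Wi by simp
        then show ?thesis using False QAct unfolding W_def by auto
      qed
      then show "p \<in> W' \<longleftrightarrow> p \<in> W a" using p by simp
    qed
    then show ?thesis using a W'(2) E_def by auto
  qed
  have Einj: "inj_on E QQ"
  proof (rule inj_onI)
    fix a a' assume aa: "a \<in> QQ" "a' \<in> QQ" "E a = E a'"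
    have ep: "eps a > 0" using epsP[OF aa(1)] by simp
    have pa: "xi + (eps a / 2) *\<^sub>R Delta a \<in> E a" using fromray[OF aa(1)] ep by simp
    then have "xi + (eps a / 2) *\<^sub>R Delta a \<in> E a'" using aa by simp
    then have WW: "W a = W a'" using pa unfolding E_def by auto
    show "a = a'"
    proof (rule ccontr)
      assume "a \<noteq> a'"
      then have "(q,a') \<in> W a" using aa(2) QQAct unfolding W_def by auto
      moreover have "(q,a') \<notin> W a'" unfolding W_def by auto
      ultimately show False using WW by simp
    qed
  qed
  have bal: "(\<Sum>a\<in>QQ. Delta a) = 0"
  proof -
    let ?w = "\<Sum>a\<in>QQ. Delta a"
    have wD: "?w \<in> D" using subD DeltaP by (intro subspace_sum) auto
    have "?w \<bullet> (x - y) = 0" if xy: "(i,x) \<in> Act" "(i,y) \<in> Act" for i x y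
    proof -
      have "?w \<bullet> (x - y) = (\<Sum>a\<in>QQ. Delta a \<bullet> (x - y))" by (simp add: inner_sum_left)
      also have "\<dots> = 0"
      proof (cases "i = q \<and> x \<noteq> y")
        case True
        have xQ: "x \<in> QQ" "y \<in> QQ" using xy True QQAct by auto
        have "(\<Sum>a\<in>QQ. Delta a \<bullet> (x - y)) = (\<Sum>a\<in>QQ. (if a = x then -1 else 0) + (if a = y then 1 else 0))"
        proof (rule sum.cong[OF refl])
          fix a assume aQ: "a \<in> QQ"
          show "Delta a \<bullet> (x - y) = (if a = x then -1 else 0) + (if a = y then 1 else 0)"
          proof (cases "a = x")
            case True
            then show ?thesis using DeltaP[OF aQ] xQ True \<open>i = q \<and> x \<noteq> y\<close> by auto
          next
            case ax: False
            show ?thesis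
            proof (cases "a = y")
              case True
              have "Delta y \<bullet> (y - x) = -1" using DeltaP[OF xQ(2)] xQ \<open>i = q \<and> x \<noteq> y\<close> by auto
              moreover have "Delta y \<bullet> (x - y) = - (Delta y \<bullet> (y - x))" by (simp add: inner_diff_right)
              ultimately show ?thesis using True ax by simp
            next
              case False
              have "(q,x) \<in> W a" "(q,y) \<in> W a" using xy ax False True unfolding W_def by auto
              then have "Delta a \<bullet> (x - y) = 0" using DeltaP[OF aQ] unfolding tie_space_def by blast
              then show ?thesis using ax False by simp
            qed
          qed
        qed
        also have "\<dots> = 0" using xQ finQQ True by (simp add: sum.distrib)
        finally show ?thesis .
      next
        case False
        then have "i \<noteq> q \<or> x = y" by auto
        then show ?thesis
        proof
          assume iq: "i \<noteq> q"
          have "Delta a \<bullet> (x - y) = 0" if aQ: "a \<in> QQ" for a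
          proof -
            have "(i,x) \<in> W a" "(i,y) \<in> W a" using xy iq unfolding W_def by auto
            then show ?thesis using DeltaP[OF aQ] unfolding tie_space_def by blast
          qed
          then show ?thesis by simp
        qed simp
      qed
      finally show ?thesis .
    qed
    then have "?w \<in> tie_space Act" unfolding tie_space_def by blast
    then show ?thesis using Z0 wD by blast
  qed
  have Edges: "{Ed. is_edge A b F md d Ed \<and> is_endpoint xi Ed} = E ` QQ"
    using Eall Eedge Eend by blast
  show ?thesis
    by (rule exI[of _ QQ], rule exI[of _ E], rule exI[of _ Delta], rule exI[of _ I])
       (use finQQ cQQ k_def Edges Einj Ipos Eray bal in auto)
qed


theorem lemma3p1:
  fixes A :: "'s::finite \<Rightarrow> (real^'n) set"
    and b :: "'s \<Rightarrow> real^'n \<Rightarrow> real"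
    and m :: "'s \<Rightarrow> nat"
    and md :: "nat \<Rightarrow> 's \<Rightarrow> nat"
    and F :: "nat \<Rightarrow> (real^'n) set"
    and d :: nat
    and xi :: "real^'n"
  assumes "CARD('s) \<le> CARD('n)"
    and "\<forall>i. finite (A i) \<and> A i \<noteq> {}"
    and "\<forall>i. \<forall>a \<in> A i. \<forall>k. a $ k \<in> \<int>"
    and "(\<Sum>i\<in>UNIV. m i) = CARD('n)"
    and "general_position A b"
    and "affine_flag F"
    and "generic_flag A F"
    and "admissible_seq m CARD('n) md"
    and "1 \<le> d" and "d \<le> CARD('n)"
    and "is_vertex A b F md d xi"
  shows "(\<exists>!q. mult_at A b xi q = md (d - 1) q + 1) \<and>
         (\<forall>q. mult_at A b xi q = md (d - 1) q + 1 \<longrightarrow>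
            (let k = mult_at A b xi q + 1;
                 Edges = {E. is_edge A b F md d E \<and> is_endpoint xi E}
             in k = md (d - 1) q + 2 \<and> finite Edges \<and> card Edges = k \<and>
                (\<exists>(Delta :: nat \<Rightarrow> real^'n) (I :: nat \<Rightarrow> ereal).
                    (\<forall>j\<in>{1..k}. 0 < I j) \<and>
                    Edges = (\<lambda>j. {xi + t *\<^sub>R Delta j | t. 0 < t \<and> ereal t < I j}) ` {1..k} \<and>
                    (\<Sum>j = 1..k. Delta j) = 0)))"
proof -
  have fin: "\<forall>i. finite (A i) \<and> A i \<noteq> {}" using assms(2) .
  have md_sum: "(\<Sum>i\<in>UNIV. md (d - 1) i) = d - 1"
    using assms(8) assms(10) unfolding admissible_seq_def by auto
  have xiF: "xi \<in> F d" and ge: "\<forall>i. md (d - 1) i \<le> mult_at A b xi i"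
    and smult: "(\<Sum>i\<in>UNIV. mult_at A b xi i) = d"
    using assms(11) unfolding is_vertex_def Xd_def by auto
  define g where "g i = mult_at A b xi i - md (d - 1) i" for i
  have sg: "sum g UNIV = 1"
  proof -
    have "sum g UNIV = (\<Sum>i\<in>UNIV. mult_at A b xi i) - (\<Sum>i\<in>UNIV. md (d - 1) i)"
      unfolding g_def using ge by (intro sum_subtractf_nat) auto
    then show ?thesis using smult md_sum assms(9) by simp
  qed
  have gq: "mult_at A b xi q = md (d - 1) q + 1 \<longleftrightarrow> g q = 1" for q
    using ge[rule_format, of q] unfolding g_def by auto
  have ex1: "\<exists>!q. mult_at A b xi q = md (d - 1) q + 1"
  proof -
    obtain q where "g q = 1" using sum_one_ex[OF sg] by blast
    moreover have "q' = q" if "g q' = 1" for q'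
      using sum_one_nat[OF sg, of q' q] that \<open>g q = 1\<close> by (cases "q' = q") auto
    ultimately show ?thesis unfolding gq by blast
  qed
  have aff: "affine (F d)" using assms(6) assms(10) unfolding affine_flag_def by auto
  have gen: "\<forall>W \<subseteq> Sigma UNIV A. dim (diffs (F d) \<inter> tie_space W) = d + dim (tie_space W) - CARD('n)"
    using assms(7) assms(10) unfolding generic_flag_def by auto
  have part2: "let k = mult_at A b xi q + 1;
                 Edges = {E. is_edge A b F md d E \<and> is_endpoint xi E}
             in k = md (d - 1) q + 2 \<and> finite Edges \<and> card Edges = k \<and>
                (\<exists>(Delta :: nat \<Rightarrow> real^'n) (I :: nat \<Rightarrow> ereal).
                    (\<forall>j\<in>{1..k}. 0 < I j) \<and>
                    Edges = (\<lambda>j. {xi + t *\<^sub>R Delta j | t. 0 < t \<and> ereal t < I j}) ` {1..k} \<and>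
                    (\<Sum>j = 1..k. Delta j) = 0)"
    if hq: "mult_at A b xi q = md (d - 1) q + 1" for q
  proof -
    have mo: "\<forall>i. i \<noteq> q \<longrightarrow> mult_at A b xi i = md (d - 1) i"
    proof (intro allI impI)
      fix i assume "i \<noteq> q"
      then have "g i = 0" using sum_one_nat[OF sg, of q i] hq gq by auto
      then show "mult_at A b xi i = md (d - 1) i" using ge[rule_format, of i] unfolding g_def by auto
    qed
    obtain QQ E and Delta :: "real^'n \<Rightarrow> real^'n" and I :: "real^'n \<Rightarrow> ereal" where
      M: "finite QQ" "card QQ = md (d - 1) q + 2"
         "{E. is_edge A b F md d E \<and> is_endpoint xi E} = E ` QQ" "inj_on E QQ"
         "\<forall>a\<in>QQ. 0 < I a \<and> E a = {xi + t *\<^sub>R Delta a | t. 0 < t \<and> ereal t < I a}"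
         "(\<Sum>a\<in>QQ. Delta a) = 0"
      using main_q[where A=A and b=b and F=F and d=d and xi=xi and md=md and q=q, OF assms(5) fin aff xiF gen assms(10) assms(9) hq mo smult] by blast
    define k where "k = md (d - 1) q + 2"
    obtain h where h: "bij_betw h {0..<card QQ} QQ" using ex_bij_betw_nat_finite[OF M(1)] by blast
    have sh: "bij_betw (\<lambda>j. j - 1) {1..k} {0..<k}"
      unfolding bij_betw_def inj_on_def
    proof (intro conjI ballI impI)
      show "(\<lambda>j. j - 1) ` {1..k} = {0..<k}"
      proof
        show "(\<lambda>j. j - 1) ` {1..k} \<subseteq> {0..<k}" by auto
        show "{0..<k} \<subseteq> (\<lambda>j. j - 1) ` {1..k}"
        proof
          fix x assume "x \<in> {0..<k}"
          then have "Suc x \<in> {1..k}" "x = Suc x - 1" by auto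
          then show "x \<in> (\<lambda>j. j - 1) ` {1..k}" by blast
        qed
      qed
    qed auto
    define gg where "gg j = h (j - 1)" for j
    have bg: "bij_betw gg {1..k} QQ"
      unfolding gg_def using bij_betw_trans[OF sh h[unfolded M(2) k_def[symmetric]]] by (simp add: o_def)
    have ggQ: "gg j \<in> QQ" if "j \<in> {1..k}" for j using bg that by (auto simp: bij_betw_def)
    have img: "gg ` {1..k} = QQ" using bg by (simp add: bij_betw_def)
    show ?thesis unfolding Let_def
    proof (intro conjI)
      show "mult_at A b xi q + 1 = md (d - 1) q + 2" using hq by simp
      show "finite {E. is_edge A b F md d E \<and> is_endpoint xi E}" using M(3) M(1) by simp
      show "card {E. is_edge A b F md d E \<and> is_endpoint xi E} = mult_at A b xi q + 1"
        using M(3) M(4) M(2) hq by (simp add: card_image)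
      show "\<exists>(Delta :: nat \<Rightarrow> real^'n) (I :: nat \<Rightarrow> ereal).
                    (\<forall>j\<in>{1..mult_at A b xi q + 1}. 0 < I j) \<and>
                    {E. is_edge A b F md d E \<and> is_endpoint xi E} = (\<lambda>j. {xi + t *\<^sub>R Delta j | t. 0 < t \<and> ereal t < I j}) ` {1..mult_at A b xi q + 1} \<and>
                    (\<Sum>j = 1..mult_at A b xi q + 1. Delta j) = 0"
      proof (intro exI conjI)
        have kk: "mult_at A b xi q + 1 = k" using hq k_def by simp
        show "\<forall>j\<in>{1..mult_at A b xi q + 1}. 0 < (I \<circ> gg) j" unfolding kk using ggQ M(5) by auto
        have "E ` QQ = (\<lambda>j. E (gg j)) ` {1..k}" using img by auto
        also have "\<dots> = (\<lambda>j. {xi + t *\<^sub>R (Delta \<circ> gg) j | t. 0 < t \<and> ereal t < (I \<circ> gg) j}) ` {1..k}"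
          using ggQ M(5) by (intro image_cong refl) auto
        finally show "{E. is_edge A b F md d E \<and> is_endpoint xi E} = (\<lambda>j. {xi + t *\<^sub>R (Delta \<circ> gg) j | t. 0 < t \<and> ereal t < (I \<circ> gg) j}) ` {1..mult_at A b xi q + 1}"
          unfolding kk M(3) .
        have "(\<Sum>j = 1..k. Delta (gg j)) = (\<Sum>a\<in>QQ. Delta a)" by (rule sum.reindex_bij_betw[OF bg])
        then show "(\<Sum>j = 1..mult_at A b xi q + 1. (Delta \<circ> gg) j) = 0" unfolding kk using M(6) by simp
      qed
    qed
  qed
  show ?thesis using ex1 part2 by blast
qed


end
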